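(* $A_4(\frac15,\frac15,\frac15,\frac15,\frac15)$ has a unique rational solution of Type C, namely $(f_0,f_1,f_2,f_3,f_4)=(\frac t5,\frac t5,\frac t5,\frac t5,\frac t5)$.
   Context: The $A_4^{(1)}$ Painlevé equation $A_4(\alpha_0,\dots,\alpha_4)$ is the system for five functions $f_0,\dots,f_4$ of $t$ (indices in $\mathbb{Z}/5\mathbb{Z}$, ${}'=d/dt$): $f_j'=f_j(f_{j+1}-f_{j+2}+f_{j+3}-f_{j+4})+\alpha_j$ ($j=0,\dots,4$), $f_0+\dots+f_4=t$. A rational solution is a tuple of rational functions satisfying it. It is of Type C if all of $f_0,\dots,f_4$ have a pole at $t=\infty$. *)

theory Defs
  imports Complex_Main "HOL-Computational_Algebra.Computational_Algebra"
    "HOL-Computational_Algebra.Normalized_Fraction" "HOL-Computational_Algebra.Field_as_Ring"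
begin

type_synonym ratfun = "complex poly fract"

definition rf_t :: ratfun where
  "rf_t = to_fract [:0, 1:]"

definition rf_const :: "complex \<Rightarrow> ratfun" where
  "rf_const c = to_fract [:c:]"

definition rf_deriv :: "ratfun \<Rightarrow> ratfun" where
  "rf_deriv x = (case quot_of_fract x of (p, q) \<Rightarrow>
      Fract (pderiv p * q - p * pderiv q) (q * q))"

definition rf_pole_at_infinity :: "ratfun \<Rightarrow> bool" where
  "rf_pole_at_infinity x = (case quot_of_fract x of (p, q) \<Rightarrow> degree q < degree p)"

definition A4_rational_solution :: "(nat \<Rightarrow> complex) \<Rightarrow> (nat \<Rightarrow> ratfun) \<Rightarrow> bool" where
  "A4_rational_solution \<alpha> f \<longleftrightarrow>
     (\<forall>j<5. rf_deriv (f j) =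
        f j * (f ((j+1) mod 5) - f ((j+2) mod 5) + f ((j+3) mod 5) - f ((j+4) mod 5))
        + rf_const (\<alpha> j))
     \<and> (\<Sum>j<5. f j) = rf_t"

definition A4_typeC :: "(nat \<Rightarrow> ratfun) \<Rightarrow> bool" where
  "A4_typeC f \<longleftrightarrow> (\<forall>j<5. rf_pole_at_infinity (f j))"

end

theory Submission
  imports Defs
begin

abbreviation FR :: "complex poly \<Rightarrow> complex poly \<Rightarrow> ratfun" where
  "FR \<equiv> Fraction_Field.Fract"

lemma deriv_Fract:
  assumes "q \<noteq> 0"
  shows "rf_deriv (FR p q) = FR (pderiv p * q - p * pderiv q) (q*q)"
proof -
  obtain a b where ab: "quot_of_fract (FR p q) = (a,b)" by (cases "quot_of_fract (FR p q)")
  have b: "b \<noteq> 0" using snd_quot_of_fract_nonzero[of "FR p q"] ab by simp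
  have "FR a b = FR p q" using Fract_quot_of_fract[of "FR p q"] ab by simp
  hence E1: "a * q = p * b" using b assms by (simp add: eq_fract)
  hence E2: "pderiv a * q + a * pderiv q = pderiv p * b + p * pderiv b"
  proof -
    have "pderiv (a*q) = pderiv (p*b)" using E1 by simp
    thus ?thesis by (simp add: pderiv_mult algebra_simps)
  qed
  have "(pderiv a * b - a * pderiv b) * (q*q) = (pderiv p * q - p * pderiv q) * (b*b)"
    using E1 E2 by algebra
  thus ?thesis unfolding rf_deriv_def ab using b assms by (simp add: eq_fract)
qed

lemma deriv_add: "rf_deriv (x + y) = rf_deriv x + rf_deriv y"
proof (cases x)
  case (Fract a b)
  show ?thesis
  proof (cases y)
    case (Fract c d)
    thus ?thesis using \<open>x = FR a b\<close> \<open>b \<noteq> 0\<close>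
      by (simp add: deriv_Fract eq_fract pderiv_mult pderiv_add algebra_simps)
  qed
qed

definition rord :: "ratfun \<Rightarrow> int" where
  "rord x = int (degree (fst (quot_of_fract x))) - int (degree (snd (quot_of_fract x)))"

lemma rord_Fract:
  assumes "p \<noteq> 0" "q \<noteq> 0"
  shows "rord (FR p q) = int (degree p) - int (degree q)"
proof -
  obtain a b where ab: "quot_of_fract (FR p q) = (a,b)" by (cases "quot_of_fract (FR p q)")
  have b: "b \<noteq> 0" using snd_quot_of_fract_nonzero[of "FR p q"] ab by simp
  have "FR a b = FR p q" using Fract_quot_of_fract[of "FR p q"] ab by simp
  hence E1: "a * q = p * b" using b assms by (simp add: eq_fract)
  hence a: "a \<noteq> 0" using assms b by auto
  have "degree a + degree q = degree p + degree b"
    using E1 a b assms by (metis degree_mult_eq)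
  thus ?thesis unfolding rord_def ab by simp
qed

lemma quot_rep:
  obtains p q where "x = FR p q" "q \<noteq> 0" "quot_of_fract x = (p,q)" "x \<noteq> 0 \<Longrightarrow> p \<noteq> 0"
proof -
  obtain a b where ab: "quot_of_fract x = (a,b)" by (cases "quot_of_fract x")
  have b: "b \<noteq> 0" using snd_quot_of_fract_nonzero[of x] ab by simp
  have "FR a b = x" using Fract_quot_of_fract[of x] ab by simp
  moreover have "x \<noteq> 0 \<Longrightarrow> a \<noteq> 0" using fst_quot_of_fract_eq_0_iff[of x] ab by simp
  ultimately show ?thesis using that b ab by metis
qed

lemma rord_mult:
  assumes "x \<noteq> 0" "y \<noteq> 0"
  shows "rord (x * y) = rord x + rord y"
proof -
  obtain a b where x: "x = FR a b" "b \<noteq> 0" "a \<noteq> 0" using quot_rep[of x] assms by metis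
  obtain c d where y: "y = FR c d" "d \<noteq> 0" "c \<noteq> 0" using quot_rep[of y] assms by metis
  show ?thesis using x y by (simp add: rord_Fract degree_mult_eq)
qed

lemma rord_add:
  assumes "x \<noteq> 0" "y \<noteq> 0" "x + y \<noteq> 0"
  shows "rord (x + y) \<le> max (rord x) (rord y)"
proof -
  obtain a b where x: "x = FR a b" "b \<noteq> 0" "a \<noteq> 0" using quot_rep[of x] assms by metis
  obtain c d where y: "y = FR c d" "d \<noteq> 0" "c \<noteq> 0" using quot_rep[of y] assms by metis
  have s: "x + y = FR (a*d + c*b) (b*d)" using x y by simp
  have n: "a*d + c*b \<noteq> 0" using assms(3) s by (auto simp: eq_fract Zero_fract_def)
  have "degree (a*d + c*b) \<le> max (degree (a*d)) (degree (c*b))" by (rule degree_add_le_max)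
  hence "degree (a*d + c*b) \<le> max (degree a + degree d) (degree c + degree b)"
    using x y by (simp add: degree_mult_eq)
  thus ?thesis using s n x y by (simp add: rord_Fract degree_mult_eq)
qed

lemma rord_uminus: "rord (- x) = rord x"
proof (cases "x = 0")
  case False
  obtain a b where x: "x = FR a b" "b \<noteq> 0" "a \<noteq> 0" using quot_rep[of x] False by metis
  show ?thesis using x by (simp add: rord_Fract)
qed simp

lemma deriv_zero: "rf_deriv 0 = 0"
  using deriv_Fract[of 1 0] by (simp add: Zero_fract_def eq_fract)

lemma rord_deriv:
  assumes "x \<noteq> 0" "rf_deriv x \<noteq> 0"
  shows "rord (rf_deriv x) \<le> rord x - 1"
proof -
  obtain p q where x: "x = FR p q" "q \<noteq> 0" "p \<noteq> 0" using quot_rep[of x] assms by metis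
  define N where "N = pderiv p * q - p * pderiv q"
  have d: "rf_deriv x = FR N (q*q)" using x deriv_Fract N_def by simp
  have N: "N \<noteq> 0" using d assms(2) by (auto simp: eq_fract Zero_fract_def)
  have dl: "degree N \<le> max (degree (pderiv p * q)) (degree (p * pderiv q))"
    unfolding N_def by (rule degree_diff_le_max)
  have "degree N + 1 \<le> degree p + degree q"
  proof (cases "pderiv p = 0")
    case True
    have pq: "pderiv q \<noteq> 0" using N N_def True by auto
    hence "degree q \<ge> 1" by (auto simp: pderiv_eq_0_iff)
    thus ?thesis using pq using True dl x by (simp add: degree_mult_eq degree_pderiv)
  next
    case False
    hence p1: "degree p \<ge> 1" by (auto simp: pderiv_eq_0_iff)
    show ?thesis
    proof (cases "pderiv q = 0")
      case True
      thus ?thesis using False dl x p1 by (simp add: degree_mult_eq degree_pderiv)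
    next
      case F2: False
      hence "degree q \<ge> 1" by (auto simp: pderiv_eq_0_iff)
      thus ?thesis using False F2 dl x p1 by (simp add: degree_mult_eq degree_pderiv)
    qed
  qed
  thus ?thesis using d N x by (simp add: rord_Fract degree_mult_eq)
qed

lemma rord_const: "c \<noteq> 0 \<Longrightarrow> rord (rf_const c) = 0"
  unfolding rf_const_def rord_def by simp

lemma pole_rord: "rf_pole_at_infinity x \<Longrightarrow> x \<noteq> 0 \<and> rord x \<ge> 1"
  unfolding rf_pole_at_infinity_def rord_def
  by (cases "quot_of_fract x") (auto simp del: fst_quot_of_fract_eq_0_iff simp: fst_quot_of_fract_eq_0_iff[symmetric])

definition Bd :: "int \<Rightarrow> ratfun \<Rightarrow> bool" where "Bd n x \<longleftrightarrow> x = 0 \<or> rord x \<le> n"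

lemma Bd_add: "Bd n x \<Longrightarrow> Bd n y \<Longrightarrow> Bd n (x + y)"
  unfolding Bd_def using rord_add[of x y] by fastforce

lemma Bd_uminus: "Bd n x \<Longrightarrow> Bd n (- x)"
  unfolding Bd_def by (simp add: rord_uminus)

lemma Bd_diff: "Bd n x \<Longrightarrow> Bd n y \<Longrightarrow> Bd n (x - y)"
  using Bd_add[of n x "-y"] Bd_uminus[of n y] by simp

lemma Bd_const: assumes "Bd n x" shows "Bd n (rf_const c * x)"
proof (cases "c = 0 \<or> x = 0")
  case True thus ?thesis by (auto simp: Bd_def rf_const_def)
next
  case False
  hence "rf_const c \<noteq> 0" by (simp add: rf_const_def)
  thus ?thesis using assms False rord_mult[of "rf_const c" x] rord_const[of c] by (simp add: Bd_def)
qed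

lemma Bd_of_nat: "Bd n x \<Longrightarrow> Bd n (of_nat m * x)"
  by (induction m) (auto simp: Bd_def[of n 0] algebra_simps intro: Bd_add)

lemma Bd_numeral: "Bd n x \<Longrightarrow> Bd n (numeral m * x)"
  using Bd_of_nat[of n x "numeral m"] by simp

lemma five_k: "5 * rf_const (1/5) = 1"
proof -
  have "(5::ratfun) = to_fract 5" unfolding to_fract_def by (metis Fract_of_nat_eq of_nat_numeral)
  moreover have "([:5:] * [:1/5:] :: complex poly) = 1" by (simp add: one_pCons)
  moreover have "(5 :: complex poly) = [:5:]" by (simp add: numeral_poly)
  ultimately show ?thesis unfolding rf_const_def by (metis to_fract_mult to_fract_1)
qed

lemma deriv_T: "rf_deriv (rf_const (1/5) * rf_t) = rf_const (1/5)"
proof -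
  have "rf_const (1/5) * rf_t = FR [:0, 1/5:] 1"
    unfolding rf_const_def rf_t_def to_fract_def by simp
  thus ?thesis using deriv_Fract[of 1 "[:0, 1/5:]"] unfolding rf_const_def to_fract_def by (simp add: pderiv_pCons)
qed

lemma pole_T: "rf_pole_at_infinity (rf_const (1/5) * rf_t)"
proof -
  have "rf_const (1/5) * rf_t = to_fract [:0, 1/5:]"
    unfolding rf_const_def rf_t_def by (simp del: to_fract_mult add: to_fract_mult[symmetric])
  thus ?thesis unfolding rf_pole_at_infinity_def by simp
qed

lemma idx: "(j::nat) < 5 \<Longrightarrow> j = 0 \<or> j = 1 \<or> j = 2 \<or> j = 3 \<or> j = 4" by auto

theorem lemma3p7:
  fixes f :: "nat \<Rightarrow> ratfun"
  shows "(A4_rational_solution (\<lambda>_. 1/5) f \<and> A4_typeC f) \<longleftrightarrow>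
         (\<forall>j<5. f j = rf_const (1/5) * rf_t)"
proof
  assume "\<forall>j<5. f j = rf_const (1/5) * rf_t"
  hence F: "\<And>j. j < 5 \<Longrightarrow> f j = rf_const (1/5) * rf_t" by blast
  have Fm: "\<And>j i. f (j mod 5) = rf_const (1/5) * rf_t" using F by simp
  have s: "(\<Sum>j<5. f j) = rf_t" using F five_k by (simp add: eval_nat_numeral algebra_simps)
  show "A4_rational_solution (\<lambda>_. 1/5) f \<and> A4_typeC f"
    unfolding A4_rational_solution_def A4_typeC_def using s F Fm deriv_T pole_T by simp
next
  assume H: "A4_rational_solution (\<lambda>_. 1/5) f \<and> A4_typeC f"
  define k where "k = rf_const (1/5)"
  define T where "T = k * rf_t"
  define g where "g j = f j - T" for j
  define h where "h j = g ((j+1) mod 5) - g ((j+2) mod 5) + g ((j+3) mod 5) - g ((j+4) mod 5)" for j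
  have eq: "\<And>j. j < 5 \<Longrightarrow> rf_deriv (f j) = f j * (f ((j+1) mod 5) - f ((j+2) mod 5)
      + f ((j+3) mod 5) - f ((j+4) mod 5)) + k"
    using H unfolding A4_rational_solution_def k_def by blast
  have sf: "(\<Sum>j<5. f j) = rf_t" using H unfolding A4_rational_solution_def by blast
  have pole: "\<And>j. j < 5 \<Longrightarrow> f j \<noteq> 0 \<and> rord (f j) \<ge> 1"
    using H pole_rord unfolding A4_typeC_def by blast
  have k5: "5 * k = 1" using five_k k_def by simp
  have sg: "g 0 + g 1 + g 2 + g 3 + g 4 = 0"
  proof -
    have "g 0 + g 1 + g 2 + g 3 + g 4 = (\<Sum>j<5. f j) - (5 * k) * rf_t"
      by (simp add: g_def T_def eval_nat_numeral algebra_simps)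
    thus ?thesis using sf k5 by simp
  qed
  have dg: "\<And>j. j < 5 \<Longrightarrow> rf_deriv (g j) = f j * h j"
  proof -
    fix j :: nat assume j: "j < 5"
    have "rf_deriv (f j) = rf_deriv (g j) + k"
      using deriv_add[of "g j" T] deriv_T unfolding g_def T_def k_def by simp
    moreover have "f ((j+1) mod 5) - f ((j+2) mod 5) + f ((j+3) mod 5) - f ((j+4) mod 5) = h j"
      unfolding h_def g_def by simp
    ultimately show "rf_deriv (g j) = f j * h j" using eq[OF j] by simp
  qed
  have comb: "\<And>j. j < 5 \<Longrightarrow> g j = k * (-(4 * h j + 7 * h ((j+1) mod 5) + 5 * h ((j+2) mod 5)
       + 3 * h ((j+3) mod 5) + h ((j+4) mod 5)))"
  proof -
    fix j :: nat assume j: "j < 5"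
    have "5 * g j = -(4 * h j + 7 * h ((j+1) mod 5) + 5 * h ((j+2) mod 5)
       + 3 * h ((j+3) mod 5) + h ((j+4) mod 5))"
    proof -
      have two: "g (Suc (Suc 0)) = g 2" by (simp add: numeral_2_eq_2)
      have g4: "g 4 = - (g 0 + g 1 + g 2 + g 3)" using sg by (simp add: algebra_simps eq_neg_iff_add_eq_0)
      show ?thesis using idx[OF j] unfolding h_def
        by (elim disjE) (simp_all add: g4 algebra_simps two)
    qed
    hence "k * (5 * g j) = k * (-(4 * h j + 7 * h ((j+1) mod 5) + 5 * h ((j+2) mod 5)
       + 3 * h ((j+3) mod 5) + h ((j+4) mod 5)))" by (rule arg_cong)
    moreover have "k * (5 * g j) = g j" using k5 by (metis mult.assoc mult.commute mult_1)
    ultimately show "g j = k * (-(4 * h j + 7 * h ((j+1) mod 5) + 5 * h ((j+2) mod 5)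
       + 3 * h ((j+3) mod 5) + h ((j+4) mod 5)))" by simp
  qed
  have step: "\<forall>j<5. Bd (n - 2) (g j)" if P: "\<forall>j<5. Bd n (g j)" for n
  proof -
    have Bh: "Bd (n - 2) (h j)" if j: "j < 5" for j
    proof (cases "h j = 0")
      case True thus ?thesis by (simp add: Bd_def)
    next
      case False
      have fj: "f j \<noteq> 0" "rord (f j) \<ge> 1" using pole[OF j] by auto
      have dne: "rf_deriv (g j) \<noteq> 0" using dg[OF j] fj False by simp
      hence gne: "g j \<noteq> 0" using deriv_zero by auto
      have "rord (g j) \<le> n" using P j gne unfolding Bd_def by blast
      moreover have "rord (rf_deriv (g j)) \<le> rord (g j) - 1" using rord_deriv[OF gne dne] .
      moreover have "rord (rf_deriv (g j)) = rord (f j) + rord (h j)"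
        using dg[OF j] rord_mult[OF fj(1) False] by simp
      ultimately show ?thesis using fj by (simp add: Bd_def)
    qed
    show ?thesis
    proof (intro allI impI)
      fix j :: nat assume j: "j < 5"
      have m: "\<And>i. Bd (n - 2) (h (i mod 5))" using Bh by simp
      have "Bd (n - 2) (-(4 * h j + 7 * h ((j+1) mod 5) + 5 * h ((j+2) mod 5)
       + 3 * h ((j+3) mod 5) + h ((j+4) mod 5)))"
        by (intro Bd_uminus Bd_add Bd_numeral m Bh j)
      thus "Bd (n - 2) (g j)" unfolding comb[OF j] k_def by (rule Bd_const)
    qed
  qed
  define D0 where "D0 = (\<Sum>j<5. \<bar>rord (g j)\<bar>)"
  have P0: "\<forall>j<5. Bd D0 (g j)"
  proof (intro allI impI)
    fix j :: nat assume "j < 5"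
    hence "\<bar>rord (g j)\<bar> \<le> D0" unfolding D0_def
      by (intro member_le_sum) auto
    thus "Bd D0 (g j)" unfolding Bd_def by linarith
  qed
  have Pm: "\<forall>j<5. Bd (D0 - 2 * int m) (g j)" for m
  proof (induction m)
    case 0 thus ?case using P0 by simp
  next
    case (Suc m)
    from step[OF Suc] show ?case by (simp add: algebra_simps)
  qed
  show "\<forall>j<5. f j = rf_const (1/5) * rf_t"
  proof (intro allI impI)
    fix j :: nat assume j: "j < 5"
    have "g j = 0"
    proof (rule ccontr)
      assume ne: "g j \<noteq> 0"
      have le: "\<bar>rord (g j)\<bar> \<le> D0" unfolding D0_def using j
        by (intro member_le_sum) auto
      have "Bd (D0 - 2 * int (nat (D0 - rord (g j)) + 1)) (g j)" using Pm j by blast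
      thus False using ne le by (simp add: Bd_def split: if_split_asm; arith)
    qed
    thus "f j = rf_const (1/5) * rf_t" unfolding g_def T_def k_def by simp
  qed
qed

end
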